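(* For every multiway system $M=(R,s,\Sigma)$ there is a multiway system $M'=(R',s',\{a,b\})$, where $a,b$ are two distinct symbols, such that the states graphs of $M$ and $M'$ are isomorphic.
   Context: A (string-based) multiway system is a triple $(R,s,\Sigma)$ with $\Sigma$ a finite alphabet, $R$ a finite set of string replacement rules $r\to t$ with $r,t\in\Sigma^*$, and initial string $s\in\Sigma^*$. Its states graph is the directed graph whose vertices are the strings reachable from $s$ by repeated rule application, with an edge $u\to v$ whenever $v$ arises from $u$ by replacing one occurrence of some rule's left side $r$ in $u$ by the corresponding right side $t$. *)

theory Defs
  imports Main
begin

definition multiway_system :: "('a list \<times> 'a list) set \<Rightarrow> 'a list \<Rightarrow> 'a set \<Rightarrow> bool" where
  "multiway_system R s \<Sigma> \<longleftrightarrow>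
     finite \<Sigma> \<and> finite R \<and> (\<forall>(r, t) \<in> R. set r \<subseteq> \<Sigma> \<and> set t \<subseteq> \<Sigma>) \<and> set s \<subseteq> \<Sigma>"

definition mw_step :: "('a list \<times> 'a list) set \<Rightarrow> 'a list \<Rightarrow> 'a list \<Rightarrow> bool" where
  "mw_step R u v \<longleftrightarrow> (\<exists>x y r t. (r, t) \<in> R \<and> u = x @ r @ y \<and> v = x @ t @ y)"

definition mw_states :: "('a list \<times> 'a list) set \<Rightarrow> 'a list \<Rightarrow> 'a list set" where
  "mw_states R s = {v. (mw_step R)\<^sup>*\<^sup>* s v}"

definition mw_edges :: "('a list \<times> 'a list) set \<Rightarrow> 'a list \<Rightarrow> ('a list \<times> 'a list) set" where
  "mw_edges R s = {(u, v). u \<in> mw_states R s \<and> v \<in> mw_states R s \<and> mw_step R u v}"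

definition digraph_iso :: "'u set \<Rightarrow> ('u \<times> 'u) set \<Rightarrow> 'v set \<Rightarrow> ('v \<times> 'v) set \<Rightarrow> bool" where
  "digraph_iso V E W F \<longleftrightarrow>
     (\<exists>f. bij_betw f V W \<and> (\<forall>u\<in>V. \<forall>v\<in>V. (u, v) \<in> E \<longleftrightarrow> (f u, f v) \<in> F))"

end

theory Submission
  imports Defs
begin

lemma sim_iso:
  assumes S0: "s \<in> S" and Scl: "\<And>u v. u \<in> S \<Longrightarrow> mw_step R u v \<Longrightarrow> v \<in> S"
    and inj: "inj_on \<phi> S"
    and sim: "\<And>u v'. u \<in> S \<Longrightarrow> mw_step R' (\<phi> u) v' \<longleftrightarrow> (\<exists>v. mw_step R u v \<and> v' = \<phi> v)"
  shows "digraph_iso (mw_states R s) (mw_edges R s) (mw_states R' (\<phi> s)) (mw_edges R' (\<phi> s))"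
proof -
  have sub: "mw_states R s \<subseteq> S"
  proof
    fix v assume "v \<in> mw_states R s"
    hence "(mw_step R)\<^sup>*\<^sup>* s v" by (simp add: mw_states_def)
    thus "v \<in> S" by induction (use S0 Scl in auto)
  qed
  have eq: "mw_states R' (\<phi> s) = \<phi> ` mw_states R s"
  proof
    show "mw_states R' (\<phi> s) \<subseteq> \<phi> ` mw_states R s"
    proof
      fix v' assume "v' \<in> mw_states R' (\<phi> s)"
      hence "(mw_step R')\<^sup>*\<^sup>* (\<phi> s) v'" by (simp add: mw_states_def)
      thus "v' \<in> \<phi> ` mw_states R s"
      proof induction
        case base thus ?case by (auto simp: mw_states_def)
      next
        case (step y z)
        then obtain v where v: "v \<in> mw_states R s" "y = \<phi> v" by auto
        with sub have "v \<in> S" by auto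
        with step(2) v sim obtain w where "mw_step R v w" "z = \<phi> w" by blast
        with v show ?case
          by (auto simp: mw_states_def intro: rtranclp.rtrancl_into_rtrancl)
      qed
    qed
  next
    show "\<phi> ` mw_states R s \<subseteq> mw_states R' (\<phi> s)"
    proof
      fix x assume "x \<in> \<phi> ` mw_states R s"
      then obtain v where v: "(mw_step R)\<^sup>*\<^sup>* s v" "x = \<phi> v" by (auto simp: mw_states_def)
      have "(mw_step R')\<^sup>*\<^sup>* (\<phi> s) (\<phi> v)" using v(1)
      proof induction
        case base thus ?case by simp
      next
        case (step y z)
        have "y \<in> S" using step(1) sub by (auto simp: mw_states_def)
        hence "mw_step R' (\<phi> y) (\<phi> z)" using sim step(2) by blast
        thus ?case using step(3) by (auto intro: rtranclp.rtrancl_into_rtrancl)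
      qed
      thus "x \<in> mw_states R' (\<phi> s)" using v by (simp add: mw_states_def)
    qed
  qed
  have bij: "bij_betw \<phi> (mw_states R s) (mw_states R' (\<phi> s))"
    unfolding eq bij_betw_def using inj_on_subset[OF inj sub] by simp
  have edges: "(u, v) \<in> mw_edges R s \<longleftrightarrow> (\<phi> u, \<phi> v) \<in> mw_edges R' (\<phi> s)"
    if "u \<in> mw_states R s" "v \<in> mw_states R s" for u v
  proof -
    have uS: "u \<in> S" and vS: "v \<in> S" using that sub by auto
    have "mw_step R' (\<phi> u) (\<phi> v) \<longleftrightarrow> mw_step R u v"
    proof
      assume "mw_step R' (\<phi> u) (\<phi> v)"
      then obtain w where w: "mw_step R u w" "\<phi> v = \<phi> w" using sim[OF uS] by blast
      have "w \<in> S" using Scl[OF uS w(1)] .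
      with w vS inj have "v = w" by (auto dest: inj_onD)
      with w show "mw_step R u v" by simp
    next
      assume "mw_step R u v" thus "mw_step R' (\<phi> u) (\<phi> v)" using sim[OF uS] by blast
    qed
    thus ?thesis using that eq by (auto simp: mw_edges_def)
  qed
  show ?thesis unfolding digraph_iso_def using bij edges by blast
qed

lemma iso_trans:
  assumes "digraph_iso V E W F" "digraph_iso W F X G"
  shows "digraph_iso V E X G"
proof -
  obtain f where f: "bij_betw f V W" "\<forall>u\<in>V. \<forall>v\<in>V. (u, v) \<in> E \<longleftrightarrow> (f u, f v) \<in> F"
    using assms(1) by (auto simp: digraph_iso_def)
  obtain g where g: "bij_betw g W X" "\<forall>u\<in>W. \<forall>v\<in>W. (u, v) \<in> F \<longleftrightarrow> (g u, g v) \<in> G"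
    using assms(2) by (auto simp: digraph_iso_def)
  have "bij_betw (g \<circ> f) V X" using f(1) g(1) by (rule bij_betw_trans)
  moreover have "\<forall>u\<in>V. \<forall>v\<in>V. (u, v) \<in> E \<longleftrightarrow> ((g \<circ> f) u, (g \<circ> f) v) \<in> G"
    using f g bij_betwE[OF f(1)] by auto
  ultimately show ?thesis unfolding digraph_iso_def by blast
qed


definition cw :: "'b \<Rightarrow> 'b \<Rightarrow> nat \<Rightarrow> 'b list" where
  "cw a b n = a # replicate (Suc n) b @ [a]"

definition enc :: "'b \<Rightarrow> 'b \<Rightarrow> ('c \<Rightarrow> nat) \<Rightarrow> 'c list \<Rightarrow> 'b list" where
  "enc a b f w = concat (map (\<lambda>x. cw a b (f x)) w)"

lemma enc_simps[simp]: "enc a b f [] = []" "enc a b f (x # w) = cw a b (f x) @ enc a b f w"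
  "enc a b f (u @ v) = enc a b f u @ enc a b f v"
  by (auto simp: enc_def)

lemma rep_eq:
  assumes "a \<noteq> b" "replicate m b @ a # P = replicate n b @ a # Q"
  shows "m = n \<and> P = Q"
  using assms(2)
proof (induction m arbitrary: n)
  case 0 thus ?case using assms(1) by (cases n) auto
next
  case (Suc m) thus ?case using assms(1) by (cases n) auto
qed

lemma cw_eq:
  assumes "a \<noteq> b" "cw a b m @ P = cw a b n @ Q"
  shows "m = n \<and> P = Q"
  using assms rep_eq[OF assms(1), of "Suc m" P "Suc n" Q] by (simp add: cw_def)

lemma enc_prefix:
  assumes "a \<noteq> b" "inj_on f A" "set r \<subseteq> A" "set w \<subseteq> A" "enc a b f r @ Y = enc a b f w"
  shows "\<exists>w2. w = r @ w2 \<and> Y = enc a b f w2"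
  using assms(3-5)
proof (induction r arbitrary: w)
  case Nil thus ?case by auto
next
  case (Cons c r)
  then obtain d w' where w: "w = d # w'" by (cases w) (auto simp: cw_def)
  with Cons.prems have "cw a b (f c) @ (enc a b f r @ Y) = cw a b (f d) @ enc a b f w'" by simp
  from cw_eq[OF assms(1) this] have "f c = f d" "enc a b f r @ Y = enc a b f w'" by auto
  moreover have "c = d" using \<open>f c = f d\<close> assms(2) Cons.prems w by (auto dest: inj_onD)
  ultimately show ?case using Cons w by force
qed

lemma enc_inj:
  assumes "a \<noteq> b" "inj_on f A"
  shows "inj_on (enc a b f) {w. set w \<subseteq> A}"
proof (rule inj_onI)
  fix u v assume "u \<in> {w. set w \<subseteq> A}" "v \<in> {w. set w \<subseteq> A}" "enc a b f u = enc a b f v"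
  then obtain w2 where "v = u @ w2" "[] = enc a b f w2"
    using enc_prefix[OF assms, of u v "[]"] by auto
  thus "u = v" by (cases w2) (auto simp: cw_def)
qed

lemma suffix_cw:
  assumes "replicate k b @ [a] = X @ us" "us \<noteq> []"
  shows "\<exists>j. us = replicate j b @ [a]"
proof -
  have "us = drop (length X) (replicate k b @ [a])" using assms(1) by simp
  moreover have "Suc k = length X + length us" using arg_cong[OF assms(1), of length] by simp
  hence "length X \<le> k" using assms(2) by (cases us) auto
  ultimately show ?thesis by simp
qed

lemma enc_sync:
  assumes ab: "a \<noteq> b" and inj: "inj_on f A" and r: "set r \<subseteq> A" "r \<noteq> []"
  shows "set w \<subseteq> A \<Longrightarrow> enc a b f w = X @ enc a b f r @ Y \<Longrightarrow>
    \<exists>w1 w2. w = w1 @ r @ w2 \<and> X = enc a b f w1 \<and> Y = enc a b f w2"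
proof (induction w arbitrary: X)
  case Nil thus ?case using r by (cases r) (auto simp: cw_def)
next
  case (Cons c w')
  obtain r1 r' where rr: "r = r1 # r'" using r by (cases r) auto
  have encr: "enc a b f r @ Y = a # b # (replicate (f r1) b @ [a] @ enc a b f r' @ Y)"
    by (simp add: rr cw_def)
  show ?case
  proof (cases "X = []")
    case True
    with Cons.prems enc_prefix[OF ab inj r(1) Cons.prems(1), of Y] obtain w2 where
      "c # w' = r @ w2" "Y = enc a b f w2" by auto
    with True show ?thesis by (intro exI[of _ "[]"] exI[of _ w2]) auto
  next
    case False
    from Cons.prems(2) have "cw a b (f c) @ enc a b f w' = X @ (enc a b f r @ Y)" by simp
    then obtain us where
      "(cw a b (f c) = X @ us \<and> us @ enc a b f w' = enc a b f r @ Y) \<or>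
       (cw a b (f c) @ us = X \<and> enc a b f w' = us @ enc a b f r @ Y)"
      by (auto simp: append_eq_append_conv2)
    thus ?thesis
    proof (elim disjE conjE)
      assume 1: "cw a b (f c) = X @ us" and 2: "us @ enc a b f w' = enc a b f r @ Y"
      show ?thesis
      proof (cases "us = []")
        case True
        with 2 have "enc a b f r @ Y = enc a b f w'" by simp
        from enc_prefix[OF ab inj r(1) _ this] Cons.prems(1) obtain w2 where
          "w' = r @ w2" "Y = enc a b f w2" by auto
        with 1 True show ?thesis by (intro exI[of _ "[c]"] exI[of _ w2]) auto
      next
        case False
        obtain X' where X: "X = a # X'" using 1 \<open>X \<noteq> []\<close> by (cases X) (auto simp: cw_def)
        with 1 have "replicate (Suc (f c)) b @ [a] = X' @ us" by (simp add: cw_def)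
        from suffix_cw[OF this False] obtain j where j: "us = replicate j b @ [a]" by auto
        show ?thesis
        proof (cases j)
          case (Suc j') with 2 j encr ab show ?thesis by simp
        next
          case 0
          with 2 j encr have "enc a b f w' = b # (replicate (f r1) b @ [a] @ enc a b f r' @ Y)"
            by simp
          thus ?thesis using ab by (cases w') (auto simp: cw_def)
        qed
      qed
    next
      assume 1: "cw a b (f c) @ us = X" and 2: "enc a b f w' = us @ enc a b f r @ Y"
      from Cons.IH[OF _ 2] Cons.prems(1) obtain w1 w2 where
        "w' = w1 @ r @ w2" "us = enc a b f w1" "Y = enc a b f w2" by auto
      with 1 show ?thesis by (intro exI[of _ "c # w1"] exI[of _ w2]) auto
    qed
  qed
qed


definition R1 :: "('a list \<times> 'a list) set \<Rightarrow> 'a set \<Rightarrow> ('a option list \<times> 'a option list) set" where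
  "R1 R \<Sigma> = (\<lambda>((r, t), c). (map Some r @ [c], map Some t @ [c])) ` (R \<times> insert None (Some ` \<Sigma>))"

lemma stage1_sim:
  assumes "set u \<subseteq> \<Sigma>"
  shows "mw_step (R1 R \<Sigma>) (map Some u @ [None]) v' \<longleftrightarrow>
         (\<exists>v. mw_step R u v \<and> v' = map Some v @ [None])"
proof
  assume "mw_step (R1 R \<Sigma>) (map Some u @ [None]) v'"
  then obtain X Y r t c where rt: "(r, t) \<in> R" "c \<in> insert None (Some ` \<Sigma>)"
    and u: "map Some u @ [None] = X @ (map Some r @ [c]) @ Y"
    and v': "v' = X @ (map Some t @ [c]) @ Y"
    unfolding mw_step_def R1_def by (auto simp del: append.simps append_assoc) blast+
  show "\<exists>v. mw_step R u v \<and> v' = map Some v @ [None]"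
  proof (cases "Y = []")
    case True
    with u have "map Some u = X @ map Some r" "c = None" by auto
    then obtain x r0 where "u = x @ r0" "X = map Some x" "map Some r0 = map Some r"
      by (auto simp: map_eq_append_conv)
    moreover have "r0 = r" using \<open>map Some r0 = map Some r\<close> by (simp add: inj_map_eq_map)
    moreover have "mw_step R (x @ r @ []) (x @ t @ [])" unfolding mw_step_def using rt by blast
    ultimately show ?thesis using rt v' True \<open>c = None\<close> by auto
  next
    case False
    then obtain Y0 y where Y: "Y = Y0 @ [y]" by (cases Y rule: rev_cases) auto
    with u have "map Some u = X @ map Some r @ [c] @ Y0" "y = None" by auto
    then obtain x rest where xr0: "u = x @ rest" "X = map Some x" "map Some r @ [c] @ Y0 = map Some rest"
      using map_eq_append_conv[THEN iffD1] by blast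
    hence xr: "u = x @ rest" "X = map Some x" "map Some rest = map Some r @ (c # Y0)" by auto
    then obtain r0 rest2 where rr: "rest = r0 @ rest2" "map Some r0 = map Some r" "map Some rest2 = c # Y0"
      using map_eq_append_conv[THEN iffD1, OF xr(3)] by (metis (no_types))
    have "r0 = r" using rr(2) by (simp add: inj_map_eq_map)
    obtain c0 y0 where cy: "rest2 = c0 @ y0" "map Some c0 = [c]" "map Some y0 = Y0"
      using rr(3) by (cases rest2) auto
    note facts = xr rr cy \<open>r0 = r\<close> \<open>y = None\<close>
    have "u = x @ r @ c0 @ y0" using facts by simp
    moreover have "mw_step R (x @ r @ (c0 @ y0)) (x @ t @ (c0 @ y0))" unfolding mw_step_def using rt by blast
    ultimately show ?thesis using rt v' Y facts by auto
  qed
next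
  assume "\<exists>v. mw_step R u v \<and> v' = map Some v @ [None]"
  then obtain x y r t where rt: "(r, t) \<in> R" and u: "u = x @ r @ y"
    and v': "v' = map Some (x @ t @ y) @ [None]"
    unfolding mw_step_def by auto
  show "mw_step (R1 R \<Sigma>) (map Some u @ [None]) v'"
  proof (cases y)
    case Nil
    have "(map Some r @ [None], map Some t @ [None]) \<in> R1 R \<Sigma>"
      using rt unfolding R1_def by (auto intro!: image_eqI[of _ _ "((r, t), None)"])
    hence "mw_step (R1 R \<Sigma>) (map Some x @ (map Some r @ [None]) @ []) (map Some x @ (map Some t @ [None]) @ [])"
      unfolding mw_step_def by blast
    thus ?thesis using u v' Nil by simp
  next
    case (Cons c y')
    have "c \<in> \<Sigma>" using assms u Cons by auto
    hence "(map Some r @ [Some c], map Some t @ [Some c]) \<in> R1 R \<Sigma>"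
      using rt unfolding R1_def by (auto intro!: image_eqI[of _ _ "((r, t), Some c)"])
    hence "mw_step (R1 R \<Sigma>) (map Some x @ (map Some r @ [Some c]) @ (map Some y' @ [None]))
        (map Some x @ (map Some t @ [Some c]) @ (map Some y' @ [None]))"
      unfolding mw_step_def by blast
    thus ?thesis using u v' Cons by simp
  qed
qed


lemma stage2_sim:
  assumes ab: "a \<noteq> b" and inj: "inj_on f A"
    and rules: "\<And>r t. (r, t) \<in> Q \<Longrightarrow> r \<noteq> [] \<and> set r \<subseteq> A \<and> set t \<subseteq> A"
    and u: "set u \<subseteq> A"
  shows "mw_step ((\<lambda>(r, t). (enc a b f r, enc a b f t)) ` Q) (enc a b f u) v' \<longleftrightarrow>
         (\<exists>v. mw_step Q u v \<and> v' = enc a b f v)"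
proof
  assume "mw_step ((\<lambda>(r, t). (enc a b f r, enc a b f t)) ` Q) (enc a b f u) v'"
  then obtain X Y r t where rt: "(r, t) \<in> Q" and eu: "enc a b f u = X @ enc a b f r @ Y"
    and v': "v' = X @ enc a b f t @ Y"
    unfolding mw_step_def by auto
  from rules[OF rt] have "r \<noteq> []" "set r \<subseteq> A" by auto
  from enc_sync[OF ab inj this(2) this(1) u eu] obtain w1 w2 where
    "u = w1 @ r @ w2" "X = enc a b f w1" "Y = enc a b f w2" by auto
  moreover have "mw_step Q (w1 @ r @ w2) (w1 @ t @ w2)" unfolding mw_step_def using rt by blast
  ultimately show "\<exists>v. mw_step Q u v \<and> v' = enc a b f v" using v' by (intro exI[of _ "w1 @ t @ w2"]) auto
next
  assume "\<exists>v. mw_step Q u v \<and> v' = enc a b f v"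
  then obtain x y r t where rt: "(r, t) \<in> Q" and "u = x @ r @ y" "v' = enc a b f (x @ t @ y)"
    unfolding mw_step_def by auto
  moreover have "(enc a b f r, enc a b f t) \<in> (\<lambda>(r, t). (enc a b f r, enc a b f t)) ` Q"
    using rt by force
  hence "mw_step ((\<lambda>(r, t). (enc a b f r, enc a b f t)) ` Q) (enc a b f x @ enc a b f r @ enc a b f y)
     (enc a b f x @ enc a b f t @ enc a b f y)" unfolding mw_step_def by blast
  ultimately show "mw_step ((\<lambda>(r, t). (enc a b f r, enc a b f t)) ` Q) (enc a b f u) v'"
    by simp
qed

lemma set_enc: "set (enc a b f w) \<subseteq> {a, b}"
  by (induction w) (auto simp: cw_def)

theorem lemma4:
  fixes R :: "('a list \<times> 'a list) set" and s :: "'a list" and \<Sigma> :: "'a set"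
    and a b :: 'b
  assumes "multiway_system R s \<Sigma>" and "a \<noteq> b"
  shows "\<exists>(R' :: ('b list \<times> 'b list) set) s'. multiway_system R' s' {a, b} \<and>
           digraph_iso (mw_states R s) (mw_edges R s) (mw_states R' s') (mw_edges R' s')"
proof -
  have fin: "finite \<Sigma>" "finite R" and rs: "\<And>r t. (r, t) \<in> R \<Longrightarrow> set r \<subseteq> \<Sigma> \<and> set t \<subseteq> \<Sigma>"
    and ss: "set s \<subseteq> \<Sigma>"
    using assms(1) unfolding multiway_system_def by auto
  define A where "A = insert None (Some ` \<Sigma>)"
  have finA: "finite A" using fin by (simp add: A_def)
  obtain f :: "'a option \<Rightarrow> nat" where inj: "inj_on f A"
    using finite_imp_inj_to_nat_seg[OF finA] by blast
  define Q where "Q = R1 R \<Sigma>"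
  have Qrules: "r \<noteq> [] \<and> set r \<subseteq> A \<and> set t \<subseteq> A" if "(r, t) \<in> Q" for r t
    using that rs unfolding Q_def R1_def A_def by fastforce
  have finQ: "finite Q" unfolding Q_def R1_def using fin by simp
  define R2 where "R2 = (\<lambda>(r, t). (enc a b f r, enc a b f t)) ` Q"
  define \<phi> where "\<phi> = (\<lambda>w. map Some w @ [None :: 'a option])"
  have iso1: "digraph_iso (mw_states R s) (mw_edges R s) (mw_states Q (\<phi> s)) (mw_edges Q (\<phi> s))"
  proof (rule sim_iso[where S = "{w. set w \<subseteq> \<Sigma>}"])
    show "s \<in> {w. set w \<subseteq> \<Sigma>}" using ss by simp
    show "v \<in> {w. set w \<subseteq> \<Sigma>}" if "u \<in> {w. set w \<subseteq> \<Sigma>}" "mw_step R u v" for u v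
      using that rs unfolding mw_step_def by fastforce
    show "inj_on \<phi> {w. set w \<subseteq> \<Sigma>}" unfolding \<phi>_def by (auto intro: inj_onI simp: inj_map_eq_map)
    show "mw_step Q (\<phi> u) v' \<longleftrightarrow> (\<exists>v. mw_step R u v \<and> v' = \<phi> v)" if "u \<in> {w. set w \<subseteq> \<Sigma>}" for u v'
      using stage1_sim[of u \<Sigma> R v'] that unfolding Q_def \<phi>_def by simp
  qed
  have iso2: "digraph_iso (mw_states Q (\<phi> s)) (mw_edges Q (\<phi> s))
      (mw_states R2 (enc a b f (\<phi> s))) (mw_edges R2 (enc a b f (\<phi> s)))"
  proof (rule sim_iso[where S = "{w. set w \<subseteq> A}"])
    show "\<phi> s \<in> {w. set w \<subseteq> A}" using ss by (auto simp: \<phi>_def A_def)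
    show "v \<in> {w. set w \<subseteq> A}" if "u \<in> {w. set w \<subseteq> A}" "mw_step Q u v" for u v
      using that Qrules unfolding mw_step_def by fastforce
    show "inj_on (enc a b f) {w. set w \<subseteq> A}" by (rule enc_inj[OF assms(2) inj])
    show "mw_step R2 (enc a b f u) v' \<longleftrightarrow> (\<exists>v. mw_step Q u v \<and> v' = enc a b f v)"
      if "u \<in> {w. set w \<subseteq> A}" for u v'
      using stage2_sim[OF assms(2) inj Qrules, where u=u and v'=v'] that unfolding R2_def by simp
  qed
  have "multiway_system R2 (enc a b f (\<phi> s)) {a, b}"
    unfolding multiway_system_def R2_def using finQ
    by (simp add: set_enc split_beta)
  with iso_trans[OF iso1 iso2] show ?thesis by blast
qed

end
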